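(* Let $X,Y$ be random variables on finite alphabets $\mathcal{X},\mathcal{Y}$ with $|\mathcal{X}|<|\mathcal{Y}|$ and joint pmf $P_{XY}$ whose marginals have all entries positive, and with $P_{X|Y}$ of full row rank. For $\epsilon\ge0$ define $g_{\epsilon}(X,Y)=\max\{I(U;Y): P_{U|Y},\ X-Y-U,\ \chi^2(P_{X|U=u}\|P_X)\le\epsilon^2\ \forall u\}$ and $f_{\epsilon}(X,Y)=\max\{I(U;Y): P_{U|Y},\ X-Y-U,\ \|P_{X|U=u}-P_X\|_1\le\epsilon\ \forall u\}$. Then $g_{\epsilon}(X,Y)\le f_{\epsilon}(X,Y)\le g_{\epsilon'}(X,Y)$, where $\epsilon'=\epsilon/\sqrt{\min_{x}P_X(x)}$.
   Context: $U$ ranges over random variables on finite alphabets, generated from $Y$ through a kernel $P_{U|Y}$ so that $P_{XYU}=P_{XY}P_{U|Y}$. $\chi^2(P\|Q)=\sum_x (P(x)-Q(x))^2/Q(x)$ and $\|\cdot\|_1$ is the $\ell_1$ norm. *)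

theory Defs
  imports Complex_Main
begin

text \<open>The auxiliary variable U takes values in the finite alphabet {..<n} (n :: nat),
  generated from Y by the kernel K u y = P_{U|Y}(u|y), so P_{XYU} = P_{XY} P_{U|Y}
  (hence X - Y - U is a Markov chain).\<close>

definition PX :: "('x::finite \<Rightarrow> 'y::finite \<Rightarrow> real) \<Rightarrow> 'x \<Rightarrow> real" where
  "PX P x = (\<Sum>y\<in>UNIV. P x y)"

definition PY :: "('x::finite \<Rightarrow> 'y::finite \<Rightarrow> real) \<Rightarrow> 'y \<Rightarrow> real" where
  "PY P y = (\<Sum>x\<in>UNIV. P x y)"

text \<open>Conditional pmf P_{X|Y}(x|y), viewed as the |X| x |Y| matrix with rows indexed by x.\<close>
definition PXgY :: "('x::finite \<Rightarrow> 'y::finite \<Rightarrow> real) \<Rightarrow> 'x \<Rightarrow> 'y \<Rightarrow> real" where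
  "PXgY P x y = P x y / PY P y"

definition full_row_rank :: "('x::finite \<Rightarrow> 'y::finite \<Rightarrow> real) \<Rightarrow> bool" where
  "full_row_rank M \<longleftrightarrow> (\<forall>c. (\<forall>y. (\<Sum>x\<in>UNIV. c x * M x y) = 0) \<longrightarrow> (\<forall>x. c x = 0))"

definition is_kernel :: "nat \<Rightarrow> (nat \<Rightarrow> 'y::finite \<Rightarrow> real) \<Rightarrow> bool" where
  "is_kernel n K \<longleftrightarrow> (\<forall>u y. 0 \<le> K u y) \<and> (\<forall>y. (\<Sum>u<n. K u y) = 1)"

definition PU :: "('x::finite \<Rightarrow> 'y::finite \<Rightarrow> real) \<Rightarrow> (nat \<Rightarrow> 'y \<Rightarrow> real) \<Rightarrow> nat \<Rightarrow> real" where
  "PU P K u = (\<Sum>y\<in>UNIV. PY P y * K u y)"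

definition PXgU :: "('x::finite \<Rightarrow> 'y::finite \<Rightarrow> real) \<Rightarrow> (nat \<Rightarrow> 'y \<Rightarrow> real) \<Rightarrow> nat \<Rightarrow> 'x \<Rightarrow> real" where
  "PXgU P K u x = (\<Sum>y\<in>UNIV. P x y * K u y) / PU P K u"

definition MI_UY :: "('x::finite \<Rightarrow> 'y::finite \<Rightarrow> real) \<Rightarrow> nat \<Rightarrow> (nat \<Rightarrow> 'y \<Rightarrow> real) \<Rightarrow> real" where
  "MI_UY P n K = (\<Sum>u<n. \<Sum>y\<in>UNIV.
      (let j = PY P y * K u y in if j = 0 then 0 else j * ln (j / (PU P K u * PY P y))))"

definition chi2 :: "('x::finite \<Rightarrow> real) \<Rightarrow> ('x \<Rightarrow> real) \<Rightarrow> real" where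
  "chi2 p q = (\<Sum>x\<in>UNIV. (p x - q x)^2 / q x)"

definition l1dist :: "('x::finite \<Rightarrow> real) \<Rightarrow> ('x \<Rightarrow> real) \<Rightarrow> real" where
  "l1dist p q = (\<Sum>x\<in>UNIV. \<bar>p x - q x\<bar>)"

text \<open>The constraint "for all u" ranges over letters u with P_U(u) > 0
  (P_{X|U=u} is undefined otherwise). The max is rendered as a supremum.\<close>
definition g_eps :: "('x::finite \<Rightarrow> 'y::finite \<Rightarrow> real) \<Rightarrow> real \<Rightarrow> real" where
  "g_eps P \<epsilon> = Sup {MI_UY P n K | n K. is_kernel n K \<and>
      (\<forall>u<n. PU P K u > 0 \<longrightarrow> chi2 (PXgU P K u) (PX P) \<le> \<epsilon>^2)}"

definition f_eps :: "('x::finite \<Rightarrow> 'y::finite \<Rightarrow> real) \<Rightarrow> real \<Rightarrow> real" where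
  "f_eps P \<epsilon> = Sup {MI_UY P n K | n K. is_kernel n K \<and>
      (\<forall>u<n. PU P K u > 0 \<longrightarrow> l1dist (PXgU P K u) (PX P) \<le> \<epsilon>)}"

end

theory Submission
  imports Defs "HOL-Analysis.Convex"
begin

lemma l1_sq_le_chi2:
  fixes p q :: "'x::finite \<Rightarrow> real"
  assumes q: "\<forall>x. q x > 0" and s: "(\<Sum>x\<in>UNIV. q x) = 1"
  shows "(l1dist p q)^2 \<le> chi2 p q"
proof -
  have "(\<Sum>x\<in>UNIV. (\<bar>p x - q x\<bar> / sqrt (q x)) * sqrt (q x))^2
     \<le> (\<Sum>x\<in>UNIV. (\<bar>p x - q x\<bar> / sqrt (q x))^2) * (\<Sum>x\<in>UNIV. (sqrt (q x))^2)"
    by (rule Cauchy_Schwarz_ineq_sum)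
  moreover have "(\<Sum>x\<in>UNIV. (\<bar>p x - q x\<bar> / sqrt (q x)) * sqrt (q x)) = l1dist p q"
    unfolding l1dist_def
  proof (intro sum.cong refl)
    fix x have "q x > 0" using q by auto
    thus "\<bar>p x - q x\<bar> / sqrt (q x) * sqrt (q x) = \<bar>p x - q x\<bar>" by simp
  qed
  moreover have "(\<Sum>x\<in>UNIV. (\<bar>p x - q x\<bar> / sqrt (q x))^2) = chi2 p q"
    unfolding chi2_def using q by (intro sum.cong) (auto simp: power_divide less_imp_le)
  moreover have "(\<Sum>x\<in>UNIV. (sqrt (q x))^2) = 1"
    using q s by (simp add: less_imp_le)
  ultimately show ?thesis by simp
qed

lemma chi2_le_l1_sq:
  fixes p q :: "'x::finite \<Rightarrow> real"
  assumes m: "m > 0" and q: "\<forall>x. q x \<ge> m"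
  shows "chi2 p q \<le> (l1dist p q)^2 / m"
proof -
  let ?S = "l1dist p q"
  have "chi2 p q \<le> (\<Sum>x\<in>UNIV. (p x - q x)^2 / m)"
    unfolding chi2_def using m q
    by (intro sum_mono) (simp add: frac_le order.trans[OF _ q[rule_format]])
  also have "\<dots> = (\<Sum>x\<in>UNIV. \<bar>p x - q x\<bar> * \<bar>p x - q x\<bar>) / m"
    by (simp add: sum_divide_distrib power2_eq_square abs_mult_self_eq)
  also have "(\<Sum>x\<in>UNIV. \<bar>p x - q x\<bar> * \<bar>p x - q x\<bar>) \<le> (\<Sum>x\<in>UNIV. \<bar>p x - q x\<bar> * ?S)"
  proof (intro sum_mono mult_left_mono)
    fix x
    show "\<bar>p x - q x\<bar> \<le> ?S" unfolding l1dist_def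
      by (rule member_le_sum) auto
  qed auto
  also have "\<dots> = ?S^2" by (simp add: sum_distrib_right[symmetric] power2_eq_square l1dist_def)
  finally show ?thesis using m by (simp add: divide_right_mono)
qed


lemma MI_bound:
  fixes P :: "'x::finite \<Rightarrow> 'y::finite \<Rightarrow> real"
  assumes py: "\<forall>y. PY P y > 0" and k: "is_kernel n K"
  shows "MI_UY P n K \<le> (\<Sum>y\<in>UNIV. PY P y * \<bar>ln (PY P y)\<bar>)"
proof -
  have K0: "\<And>u y. 0 \<le> K u y" and K1: "\<And>y. (\<Sum>u<n. K u y) = 1"
    using k unfolding is_kernel_def by auto
  have trm: "(let j = PY P y * K u y in if j = 0 then 0 else j * ln (j / (PU P K u * PY P y)))
      \<le> K u y * (PY P y * \<bar>ln (PY P y)\<bar>)" for u y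
  proof -
    define j where "j = PY P y * K u y"
    have pyy: "PY P y > 0" using py by auto
    have j0: "j \<ge> 0" unfolding j_def using pyy K0[of u y] by simp
    have rhs: "K u y * (PY P y * \<bar>ln (PY P y)\<bar>) = j * \<bar>ln (PY P y)\<bar>"
      unfolding j_def by simp
    have L: "(let j = PY P y * K u y in if j = 0 then 0 else j * ln (j / (PU P K u * PY P y)))
       = (if j = 0 then 0 else j * ln (j / (PU P K u * PY P y)))" unfolding j_def Let_def by simp
    show ?thesis
    proof (cases "j = 0")
      case True show ?thesis unfolding L using True K0[of u y] pyy by simp
    next
      case False
      hence jp: "j > 0" using j0 by simp
      have nn: "\<And>y. 0 \<le> PY P y * K u y" using py K0 by (simp add: less_imp_le)
      have "j \<le> PU P K u" unfolding PU_def j_def 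
        by (rule member_le_sum[where f="\<lambda>y. PY P y * K u y"]) (use nn in auto)
      hence pu: "PU P K u > 0" "j / PU P K u \<le> 1" using jp by auto
      have pos: "j / (PU P K u * PY P y) > 0" using jp pu pyy by simp
      have "j / (PU P K u * PY P y) = (j / PU P K u) / PY P y" by simp
      also have "\<dots> \<le> 1 / PY P y" using pu pyy by (intro divide_right_mono) auto
      finally have le: "j / (PU P K u * PY P y) \<le> 1 / PY P y" .
      have "ln (j / (PU P K u * PY P y)) \<le> ln (1 / PY P y)"
        using le pos by (rule ln_mono)
      also have "\<dots> = - ln (PY P y)" using pyy by (simp add: ln_div)
      also have "\<dots> \<le> \<bar>ln (PY P y)\<bar>" by simp
      finally have "j * ln (j / (PU P K u * PY P y)) \<le> j * \<bar>ln (PY P y)\<bar>"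
        using jp by (simp add: mult_left_mono)
      thus ?thesis unfolding L rhs using False by simp
    qed
  qed
  have "MI_UY P n K \<le> (\<Sum>u<n. \<Sum>y\<in>UNIV. K u y * (PY P y * \<bar>ln (PY P y)\<bar>))"
    unfolding MI_UY_def by (intro sum_mono trm)
  also have "\<dots> = (\<Sum>y\<in>UNIV. (\<Sum>u<n. K u y) * (PY P y * \<bar>ln (PY P y)\<bar>))"
    by (subst sum.swap) (simp add: sum_distrib_right)
  also have "\<dots> = (\<Sum>y\<in>UNIV. PY P y * \<bar>ln (PY P y)\<bar>)" using K1 by simp
  finally show ?thesis .
qed

lemma PXgU_sum:
  fixes P :: "'x::finite \<Rightarrow> 'y::finite \<Rightarrow> real"
  assumes "PU P K u > 0"
  shows "(\<Sum>x\<in>UNIV. PXgU P K u x) = 1"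
proof -
  have "(\<Sum>x\<in>UNIV. \<Sum>y\<in>UNIV. P x y * K u y) = (\<Sum>y\<in>UNIV. \<Sum>x\<in>UNIV. P x y * K u y)"
    by (rule sum.swap)
  also have "\<dots> = PU P K u" unfolding PU_def PY_def by (simp add: sum_distrib_right)
  finally show ?thesis using assms unfolding PXgU_def
    by (simp add: sum_divide_distrib[symmetric])
qed

theorem corollary1:
  fixes P :: "'x::finite \<Rightarrow> 'y::finite \<Rightarrow> real" and \<epsilon> :: real
  assumes "card (UNIV :: 'x set) < card (UNIV :: 'y set)"
    and "\<forall>x y. 0 \<le> P x y"
    and "(\<Sum>x\<in>UNIV. \<Sum>y\<in>UNIV. P x y) = 1"
    and "\<forall>x. PX P x > 0"
    and "\<forall>y. PY P y > 0"
    and "full_row_rank (PXgY P)"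
    and "\<epsilon> \<ge> 0"
  shows "g_eps P \<epsilon> \<le> f_eps P \<epsilon> \<and>
         f_eps P \<epsilon> \<le> g_eps P (\<epsilon> / sqrt (Min (range (PX P))))"
proof -
  note px = assms(4) and py = assms(5) and e = assms(7)
  have sPX: "(\<Sum>x\<in>UNIV. PX P x) = 1" using assms(3) unfolding PX_def .
  have sPY: "(\<Sum>y\<in>UNIV. PY P y) = 1" using assms(3) unfolding PY_def
    by (subst sum.swap) simp
  define m where "m = Min (range (PX P))"
  have m0: "m > 0" unfolding m_def using px by (subst Min_gr_iff) auto
  have mle: "\<forall>x. PX P x \<ge> m" unfolding m_def by (auto intro: Min_le)
  define e' where "e' = \<epsilon> / sqrt m"
  have e'sq: "e'^2 = \<epsilon>^2 / m" unfolding e'_def using m0 by (simp add: power_divide)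
  define A where "A = {MI_UY P n K | n K. is_kernel n K \<and>
      (\<forall>u<n. PU P K u > 0 \<longrightarrow> chi2 (PXgU P K u) (PX P) \<le> \<epsilon>^2)}"
  define B where "B = {MI_UY P n K | n K. is_kernel n K \<and>
      (\<forall>u<n. PU P K u > 0 \<longrightarrow> l1dist (PXgU P K u) (PX P) \<le> \<epsilon>)}"
  define C where "C = {MI_UY P n K | n K. is_kernel n K \<and>
      (\<forall>u<n. PU P K u > 0 \<longrightarrow> chi2 (PXgU P K u) (PX P) \<le> e'^2)}"
  have l1nn: "l1dist p q \<ge> 0" for p q :: "'x \<Rightarrow> real" unfolding l1dist_def by (intro sum_nonneg) auto
  have AB: "A \<subseteq> B"
  proof
    fix v assume "v \<in> A"
    then obtain n K where v: "v = MI_UY P n K" "is_kernel n K"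
      "\<forall>u<n. PU P K u > 0 \<longrightarrow> chi2 (PXgU P K u) (PX P) \<le> \<epsilon>^2" unfolding A_def by blast
    have "l1dist (PXgU P K u) (PX P) \<le> \<epsilon>" if "u < n" "PU P K u > 0" for u
    proof -
      have "(l1dist (PXgU P K u) (PX P))^2 \<le> \<epsilon>^2"
        using l1_sq_le_chi2[OF px sPX, of "PXgU P K u"] v(3) that by auto
      thus ?thesis using e by (rule power2_le_imp_le)
    qed
    thus "v \<in> B" unfolding B_def using v by blast
  qed
  have BC: "B \<subseteq> C"
  proof
    fix v assume "v \<in> B"
    then obtain n K where v: "v = MI_UY P n K" "is_kernel n K"
      "\<forall>u<n. PU P K u > 0 \<longrightarrow> l1dist (PXgU P K u) (PX P) \<le> \<epsilon>" unfolding B_def by blast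
    have "chi2 (PXgU P K u) (PX P) \<le> e'^2" if "u < n" "PU P K u > 0" for u
    proof -
      have "(l1dist (PXgU P K u) (PX P))^2 \<le> \<epsilon>^2"
        using v(3) that l1nn by (auto intro: power_mono)
      hence "(l1dist (PXgU P K u) (PX P))^2 / m \<le> \<epsilon>^2 / m" using m0 by (simp add: divide_right_mono)
      thus ?thesis using chi2_le_l1_sq[OF m0 mle, of "PXgU P K u"] e'sq by simp
    qed
    thus "v \<in> C" unfolding C_def using v by blast
  qed
  define K1 where "K1 = (\<lambda>(u::nat) (y::'y). 1::real)"
  have kK1: "is_kernel 1 K1" unfolding is_kernel_def K1_def by simp
  have "PU P K1 0 = 1" unfolding PU_def K1_def using sPY by simp
  hence "PXgU P K1 0 = PX P" unfolding PXgU_def K1_def PX_def by auto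
  hence "chi2 (PXgU P K1 0) (PX P) = 0" unfolding chi2_def by simp
  hence "MI_UY P 1 K1 \<in> A" unfolding A_def using kK1 by force
  hence Ane: "A \<noteq> {}" by auto
  have bddC: "bdd_above C"
    unfolding C_def by (rule bdd_aboveI[where M="\<Sum>y\<in>UNIV. PY P y * \<bar>ln (PY P y)\<bar>"])
      (use MI_bound[OF py] in blast)
  have bddB: "bdd_above B" using bddC BC by (rule bdd_above_mono)
  have "Sup A \<le> Sup B" by (rule cSup_subset_mono[OF Ane bddB AB])
  moreover have "Sup B \<le> Sup C" using Ane AB by (intro cSup_subset_mono[OF _ bddC BC]) auto
  ultimately show ?thesis unfolding g_eps_def f_eps_def A_def B_def C_def e'_def m_def by simp
qed

end
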